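(* Let $\gamma\geq 1$ and $p=\frac{\gamma}{\gamma+1}$. Then the Kronecker approximation cone $\tilde{K}_p$ is an approximation cone for $\gamma$-FRAPP, i.e. $\tilde{K}_p$ is a closed convex cone containing the row cone of $\gamma$-FRAPP.
   Context: Let $\mathcal{T}=\{a_1,\dots,a_N\}$ be the domain of tuples, and let the data domain consist of all sequences of $k$ tuples from $\mathcal{T}$, in lexicographic order. For an $N\times N$ column-stochastic transition matrix $Q$ whose $(b,a)$ entry $P_Q(a\rightarrow b)$ is the probability that a tuple with value $a$ is changed to $b$, let $\mathcal{M}_Q$ be the algorithm that replaces each tuple independently according to $Q$; its matrix representation (columns indexed by input datasets, rows by outputs, entries $P(\mathcal{M}_Q(D)=\omega)$) is the $k$-fold Kronecker product of $Q$ with itself. $\gamma$-FRAPP is the set of all $\mathcal{M}_Q$ such that $\frac{P_Q(b\rightarrow a)}{P_Q(c\rightarrow a)}\leq\gamma$ for all $a,b,c\in\mathcal{T}$. With $e_j$ the $j$-th standard basis column vector of length $N$, the Kronecker approximation cone $\tilde{K}_p$ is the set of vectors $\vec{x}$ (indexed by datasets) satisfying $\vec{x}\cdot\bigotimes_{\ell=1}^k\big(p\,e_{i_\ell}-(1-p)\,e_{j_\ell}\big)\geq 0$ for all $i_1,\dots,i_k,j_1,\dots,j_k\in\{1,\dots,N\}$. The consistent normal form of a privacy definition (set of algorithms) is the smallest superset closed under post-processing (composition with any algorithm with independent randomness) and convex combinations (running one member with probability $p$, another with probability $1-p$); its row cone is the set of vectors $\big(c\,P[\mathcal{M}(D_1)=\omega],c\,P[\mathcal{M}(D_2)=\omega],\dots\big)$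 with $c\ge0$, $\mathcal{M}$ in the consistent normal form, $\omega$ in the range of $\mathcal{M}$. An approximation cone of a privacy definition is a closed convex cone containing its row cone. *)

theory Defs
  imports "HOL-Analysis.Analysis" "HOL-Probability.Probability"
begin

text \<open>Tuples are the elements of a finite type 'n (so N = CARD('n)); a dataset is a
  sequence of k tuples, i.e. an element of 'n^'k (k = CARD('k)).\<close>

definition frapp :: "real \<Rightarrow> (('n::finite)^('k::finite) \<Rightarrow> ('n^'k) pmf) set" where
  "frapp \<gamma> = {M. \<exists>Q :: 'n \<Rightarrow> 'n pmf.
      (\<forall>a b c. pmf (Q b) a \<le> \<gamma> * pmf (Q c) a) \<and>
      (\<forall>D \<omega>. pmf (M D) \<omega> = (\<Prod>l\<in>UNIV. pmf (Q (D $ l)) (\<omega> $ l)))}"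

inductive_set cnf :: "('d \<Rightarrow> 'o pmf) set \<Rightarrow> ('d \<Rightarrow> 'o pmf) set" for S where
  base: "M \<in> S \<Longrightarrow> M \<in> cnf S"
| postproc: "M \<in> cnf S \<Longrightarrow> (\<lambda>D. bind_pmf (M D) A) \<in> cnf S"
| convex_comb: "M1 \<in> cnf S \<Longrightarrow> M2 \<in> cnf S \<Longrightarrow> 0 \<le> q \<Longrightarrow> q \<le> 1 \<Longrightarrow>
     (\<lambda>D. bind_pmf (bernoulli_pmf q) (\<lambda>b. if b then M1 D else M2 D)) \<in> cnf S"

definition row_cone :: "(('d::finite) \<Rightarrow> 'o pmf) set \<Rightarrow> (real^'d) set" where
  "row_cone S = {x. \<exists>c \<ge> 0. \<exists>M \<in> cnf S. \<exists>\<omega> \<in> (\<Union>D. set_pmf (M D)).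
      \<forall>D. x $ D = c * pmf (M D) \<omega>}"

definition kron_cone :: "real \<Rightarrow> (real^(('n::finite)^('k::finite))) set" where
  "kron_cone p = {x. \<forall>i j :: 'n^'k.
      0 \<le> (\<Sum>D\<in>UNIV. x $ D *
             (\<Prod>l\<in>UNIV. p * (if D $ l = i $ l then 1 else 0)
                          - (1 - p) * (if D $ l = j $ l then 1 else 0)))}"

end

theory Submission
  imports Defs
begin

definition Kf :: "real \<Rightarrow> ('n::finite)^('k::finite) \<Rightarrow> 'n^'k \<Rightarrow> 'n^'k \<Rightarrow> real" where
  "Kf p i j D = (\<Prod>l\<in>UNIV. p * (if D $ l = i $ l then 1 else 0)
                          - (1 - p) * (if D $ l = j $ l then 1 else 0))"

definition good :: "real \<Rightarrow> (('n::finite)^('k::finite) \<Rightarrow> real) \<Rightarrow> bool" where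
  "good p f = (\<forall>i j. 0 \<le> (\<Sum>D\<in>UNIV. f D * Kf p i j D))"

lemma good_post:
  assumes "\<And>w. good p (\<lambda>D. pmf (N D) w)"
  shows "good p (\<lambda>D. pmf (bind_pmf (N D) A) w)"
  unfolding good_def
proof (intro allI)
  fix i j
  have eq: "(\<Sum>D\<in>UNIV. pmf (bind_pmf (N D) A) w * Kf p i j D)
     = (\<Sum>D\<in>UNIV. (\<integral>x. pmf (N D) x * pmf (A x) w * Kf p i j D \<partial>count_space UNIV))"
  proof (rule sum.cong[OF refl])
    fix D
    have "pmf (bind_pmf (N D) A) w = (\<integral>x. pmf (N D) x * pmf (A x) w \<partial>count_space UNIV)"
      by (simp add: pmf_bind measure_pmf_eq_density integral_density)
    also have "\<dots> * Kf p i j D = (\<integral>x. pmf (N D) x * pmf (A x) w * Kf p i j D \<partial>count_space UNIV)"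
      by (rule integral_mult_left_zero[symmetric])
    finally show "pmf (bind_pmf (N D) A) w * Kf p i j D = (\<integral>x. pmf (N D) x * pmf (A x) w * Kf p i j D \<partial>count_space UNIV)" by simp
  qed
  have int: "integrable (count_space UNIV) (\<lambda>x. pmf (N D) x * pmf (A x) w * Kf p i j D)" for D
  proof -
    have "integrable (count_space UNIV) (\<lambda>x. pmf (N D) x * pmf (A x) w)"
      by (rule Bochner_Integration.integrable_bound[OF integrable_pmf[of UNIV "N D"]])
         (auto simp: pmf_le_1 mult_left_le)
    then show ?thesis by (rule integrable_mult_left)
  qed
  have "(\<Sum>D\<in>UNIV. (\<integral>x. pmf (N D) x * pmf (A x) w * Kf p i j D \<partial>count_space UNIV))
       = (\<integral>x. (\<Sum>D\<in>UNIV. pmf (N D) x * pmf (A x) w * Kf p i j D) \<partial>count_space UNIV)"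
    by (rule Bochner_Integration.integral_sum[where f="\<lambda>D x. pmf (N D) x * pmf (A x) w * Kf p i j D", symmetric]) (use int in auto)
  also have "\<dots> = (\<integral>x. pmf (A x) w * (\<Sum>D\<in>UNIV. pmf (N D) x * Kf p i j D) \<partial>count_space UNIV)"
    by (simp add: sum_distrib_left mult_ac)
  also have "\<dots> \<ge> 0"
    using assms unfolding good_def by (intro integral_nonneg_AE AE_I2 mult_nonneg_nonneg) auto
  finally show "0 \<le> (\<Sum>D\<in>UNIV. pmf (bind_pmf (N D) A) w * Kf p i j D)" using eq by simp
qed

lemma good_conv:
  assumes "\<And>w. good p (\<lambda>D. pmf (M1 D) w)" "\<And>w. good p (\<lambda>D. pmf (M2 D) w)"
    "0 \<le> q" "q \<le> 1"
  shows "good p (\<lambda>D. pmf (bind_pmf (bernoulli_pmf q) (\<lambda>b. if b then M1 D else M2 D)) w)"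
proof -
  have e: "pmf (bind_pmf (bernoulli_pmf q) (\<lambda>b. if b then M1 D else M2 D)) w
      = q * pmf (M1 D) w + (1 - q) * pmf (M2 D) w" for D
    using assms(3,4) by (simp add: pmf_bind mult_ac)
  show ?thesis unfolding good_def e
  proof (intro allI)
    fix i j
    have "(\<Sum>D\<in>UNIV. (q * pmf (M1 D) w + (1 - q) * pmf (M2 D) w) * Kf p i j D)
      = q * (\<Sum>D\<in>UNIV. pmf (M1 D) w * Kf p i j D) + (1 - q) * (\<Sum>D\<in>UNIV. pmf (M2 D) w * Kf p i j D)"
      by (simp add: distrib_right sum.distrib sum_distrib_left mult.assoc)
    also have "\<dots> \<ge> 0" using assms unfolding good_def
      by (intro add_nonneg_nonneg mult_nonneg_nonneg) auto
    finally show "0 \<le> (\<Sum>D\<in>UNIV. (q * pmf (M1 D) w + (1 - q) * pmf (M2 D) w) * Kf p i j D)" .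
  qed
qed

lemma sum_vec_prod:
  fixes h :: "'k::finite \<Rightarrow> 'n::finite \<Rightarrow> real"
  shows "(\<Sum>D\<in>(UNIV::('n^'k) set). \<Prod>l\<in>UNIV. h l (D $ l)) = (\<Prod>l\<in>UNIV. \<Sum>a\<in>UNIV. h l a)"
proof -
  have b: "bij_betw vec_nth (UNIV::('n^'k) set) (PiE UNIV (\<lambda>_. UNIV))"
    by (rule bij_betwI[where g = vec_lambda]) auto
  have "(\<Prod>l\<in>UNIV. \<Sum>a\<in>UNIV. h l a) = (\<Sum>g\<in>PiE UNIV (\<lambda>_. UNIV). \<Prod>l\<in>UNIV. h l (g l))"
    by (rule prod_sum_PiE) auto
  also have "\<dots> = (\<Sum>D\<in>(UNIV::('n^'k) set). \<Prod>l\<in>UNIV. h l (D $ l))"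
    by (rule sum.reindex_bij_betw[OF b, symmetric])
  finally show ?thesis by simp
qed

lemma inner_sum:
  fixes q :: "'n::finite \<Rightarrow> real"
  shows "(\<Sum>a\<in>UNIV. q a * (p * (if a = i then 1 else 0) - (1 - p) * (if a = j then 1 else 0)))
     = p * q i - (1 - p) * q j"
proof -
  have "(\<Sum>a\<in>UNIV. q a * (p * (if a = i then 1 else 0) - (1 - p) * (if a = j then 1 else 0)))
     = (\<Sum>a\<in>UNIV. (if a = i then p * q a else 0)) - (\<Sum>a\<in>UNIV. (if a = j then (1 - p) * q a else 0))"
    by (subst sum_subtractf[symmetric], rule sum.cong) (auto simp: algebra_simps)
  also have "\<dots> = p * q i - (1 - p) * q j" by (simp add: sum.delta)
  finally show ?thesis .
qed

lemma aux_eq: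
  fixes g a b :: real
  assumes "g \<ge> 1"
  shows "g / (g + 1) * a - (1 - g / (g + 1)) * b = (g * a - b) / (g + 1)"
proof -
  have "g + 1 \<noteq> 0" using assms by simp
  then have "1 - g / (g + 1) = 1 / (g + 1)" by (simp add: field_simps)
  then show ?thesis by (simp add: diff_divide_distrib)
qed

lemma good_base:
  fixes Q :: "'n::finite \<Rightarrow> 'n pmf"
  assumes Q: "\<forall>a b c. pmf (Q b) a \<le> \<gamma> * pmf (Q c) a" and g: "\<gamma> \<ge> 1" and p: "p = \<gamma> / (\<gamma> + 1)"
  shows "good p (\<lambda>D::'n^'k::finite. \<Prod>l\<in>UNIV. pmf (Q (D $ l)) (w $ l))"
  unfolding good_def
proof (intro allI)
  fix i j :: "'n^'k"
  let ?h = "\<lambda>l a. pmf (Q a) (w $ l) * (p * (if a = i $ l then 1 else 0) - (1 - p) * (if a = j $ l then 1 else 0))"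
  have "(\<Sum>D\<in>UNIV. (\<Prod>l\<in>UNIV. pmf (Q (D $ l)) (w $ l)) * Kf p i j D)
      = (\<Sum>D\<in>(UNIV::('n^'k) set). \<Prod>l\<in>UNIV. ?h l (D $ l))"
    unfolding Kf_def by (simp add: prod.distrib[symmetric])
  also have "\<dots> = (\<Prod>l\<in>UNIV. \<Sum>a\<in>UNIV. ?h l a)" by (rule sum_vec_prod)
  also have "\<dots> = (\<Prod>l\<in>UNIV. p * pmf (Q (i $ l)) (w $ l) - (1 - p) * pmf (Q (j $ l)) (w $ l))"
    by (simp add: inner_sum)
  also have "\<dots> \<ge> 0"
  proof (intro prod_nonneg ballI)
    fix l
    have le: "pmf (Q (j $ l)) (w $ l) \<le> \<gamma> * pmf (Q (i $ l)) (w $ l)" using Q by blast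
    have "p * pmf (Q (i $ l)) (w $ l) - (1 - p) * pmf (Q (j $ l)) (w $ l)
       = (\<gamma> * pmf (Q (i $ l)) (w $ l) - pmf (Q (j $ l)) (w $ l)) / (\<gamma> + 1)"
      unfolding p using g by (rule aux_eq)
    also have "\<dots> \<ge> 0" using le g by simp
    finally show "0 \<le> p * pmf (Q (i $ l)) (w $ l) - (1 - p) * pmf (Q (j $ l)) (w $ l)" .
  qed
  finally show "0 \<le> (\<Sum>D\<in>UNIV. (\<Prod>l\<in>UNIV. pmf (Q (D $ l)) (w $ l)) * Kf p i j D)" .
qed

lemma good_cnf:
  assumes "M \<in> cnf {(\<lambda>D. map_pmf e (M D)) | M. M \<in> frapp \<gamma>}" "\<gamma> \<ge> 1" "p = \<gamma> / (\<gamma> + 1)"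
  shows "good p (\<lambda>D::('n::finite)^('k::finite). pmf (M D) w)"
  using assms(1)
proof (induction arbitrary: w)
  case (base M)
  then obtain M0 where M: "M = (\<lambda>D. map_pmf e (M0 D))" and "M0 \<in> frapp \<gamma>" by blast
  then obtain Q :: "'n \<Rightarrow> 'n pmf" where Q: "\<forall>a b c. pmf (Q b) a \<le> \<gamma> * pmf (Q c) a"
    and M0: "\<And>D w. pmf (M0 D) w = (\<Prod>l\<in>UNIV. pmf (Q (D $ l)) (w $ l))"
    unfolding frapp_def by blast
  have "good p (\<lambda>D. pmf (bind_pmf (M0 D) (\<lambda>x. return_pmf (e x))) w)"
    by (rule good_post) (simp add: M0 good_base[OF Q assms(2,3)])
  then show ?case by (simp add: M map_pmf_def)
next
  case (postproc M A)
  then show ?case by (intro good_post) auto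
next
  case (convex_comb M1 M2 q)
  then show ?case by (intro good_conv) auto
qed

theorem lemma2:
  fixes \<gamma> p :: real and e :: "('n::finite)^('k::finite) \<Rightarrow> 'o"
  assumes "\<gamma> \<ge> 1" and "p = \<gamma> / (\<gamma> + 1)"
  shows "closed (kron_cone p :: (real^('n^'k)) set) \<and> convex (kron_cone p :: (real^('n^'k)) set)
         \<and> cone (kron_cone p :: (real^('n^'k)) set)
         \<and> row_cone {(\<lambda>D. map_pmf e (M D)) | M. M \<in> frapp \<gamma>} \<subseteq> kron_cone p"
proof (intro conjI)
  show "closed (kron_cone p :: (real^('n^'k)) set)"
    unfolding kron_cone_def
    by (intro closed_Collect_all closed_Collect_le continuous_intros)
  show "convex (kron_cone p :: (real^('n^'k)) set)"
    unfolding kron_cone_def convex_def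
    by (auto simp: sum.distrib algebra_simps sum_distrib_left[symmetric]
        intro!: add_nonneg_nonneg mult_nonneg_nonneg)
  show "cone (kron_cone p :: (real^('n^'k)) set)"
    unfolding kron_cone_def cone_def
    by (auto simp: mult.assoc sum_distrib_left[symmetric] intro!: mult_nonneg_nonneg)
  show "row_cone {(\<lambda>D. map_pmf e (M D)) | M. M \<in> frapp \<gamma>} \<subseteq> kron_cone p"
  proof
    fix x :: "real^('n^'k)"
    assume "x \<in> row_cone {(\<lambda>D. map_pmf e (M D)) | M. M \<in> frapp \<gamma>}"
    then obtain c M w where c: "c \<ge> 0" and M: "M \<in> cnf {(\<lambda>D. map_pmf e (M D)) | M. M \<in> frapp \<gamma>}"
      and x: "\<And>D. x $ D = c * pmf (M D) w"
      unfolding row_cone_def by blast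
    have g: "good p (\<lambda>D. pmf (M D) w)" by (rule good_cnf[OF M assms])
    show "x \<in> kron_cone p"
      unfolding kron_cone_def
    proof (intro CollectI allI)
      fix i j :: "'n^'k"
      have "(\<Sum>D\<in>UNIV. x $ D * Kf p i j D) = c * (\<Sum>D\<in>UNIV. pmf (M D) w * Kf p i j D)"
        by (simp add: x sum_distrib_left mult.assoc)
      also have "\<dots> \<ge> 0" using g c unfolding good_def by simp
      finally show "0 \<le> (\<Sum>D\<in>UNIV. x $ D * (\<Prod>l\<in>UNIV. p * (if D $ l = i $ l then 1 else 0)
                          - (1 - p) * (if D $ l = j $ l then 1 else 0)))" by (simp add: Kf_def)
    qed
  qed
qed

end
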